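(* Let $(u_{n-1},u_{n-2},\dots,u_0)$ be a chain compatible with $(n-1,n-2,\dots,1)$ with $u_0=w_0$. Then $u_i\in S_n^{i\searrow}$ for every $i\in\{0,\dots,n-1\}$.
   Context: Permutations in one-line notation; $w_0=[n,\dots,1]$; $wt_{i,j}$ is $w$ with positions $i<j$ swapped; $\ell$ the number of inversions. $u\lessdot w$ iff $w=ut_{i,j}$, $i<j$, $\ell(w)=\ell(u)+1$; $u\lessdot_k w$ iff moreover $i\le k<j$. A $k$-chain $v_1\lessdot_k\cdots\lessdot_k v_d$ ($d\ge 1$) is increasing if the smaller of the two values exchanged at each step strictly increases along the chain. $(w_1,\dots,w_d)$ is compatible with $(k_1,\dots,k_{d-1})$ if for each $s$ there is an increasing $k_s$-chain from $w_s$ to $w_{s+1}$. $S_n^{k\searrow}=\{v\in S_n:v(k+1)>\dots>v(n)\}$ for $k\in\{0,\dots,n-1\}$. *)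

theory Defs
  imports "HOL-Combinatorics.Combinatorics"
begin

text \<open>Permutations of {1..n} in one-line notation: a function w with
  w permutes {1..n}; the entry at position i is w i.\<close>

definition inv_len :: "nat \<Rightarrow> (nat \<Rightarrow> nat) \<Rightarrow> nat" where
  "inv_len n w = card {(i, j). 1 \<le> i \<and> i < j \<and> j \<le> n \<and> w i > w j}"

definition wlong :: "nat \<Rightarrow> nat \<Rightarrow> nat" where
  "wlong n = (\<lambda>i. if 1 \<le> i \<and> i \<le> n then n + 1 - i else i)"

definition kcover_at :: "nat \<Rightarrow> nat \<Rightarrow> (nat \<Rightarrow> nat) \<Rightarrow> (nat \<Rightarrow> nat) \<Rightarrow> nat \<Rightarrow> nat \<Rightarrow> bool" where
  "kcover_at n k u w i j \<longleftrightarrow>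
     1 \<le> i \<and> i \<le> k \<and> k < j \<and> j \<le> n \<and>
     w = u \<circ> Transposition.transpose i j \<and> inv_len n w = inv_len n u + 1"

text \<open>Increasing k-chain v_1 <.k ... <.k v_d (d >= 1) from x to y: the list vs of
  permutations with the positions ps of each step; the smaller of the two exchanged values
  strictly increases along the chain.\<close>
definition incr_kchain :: "nat \<Rightarrow> nat \<Rightarrow> (nat \<Rightarrow> nat) \<Rightarrow> (nat \<Rightarrow> nat) \<Rightarrow> bool" where
  "incr_kchain n k x y \<longleftrightarrow>
     (\<exists>vs ps. vs \<noteq> [] \<and> length ps = length vs - 1 \<and> hd vs = x \<and> last vs = y \<and>
        (\<forall>v\<in>set vs. v permutes {1..n}) \<and>
        (\<forall>s < length ps. kcover_at n k (vs ! s) (vs ! Suc s) (fst (ps ! s)) (snd (ps ! s))) \<and>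
        (\<forall>s. Suc s < length ps \<longrightarrow>
           min ((vs ! s) (fst (ps ! s))) ((vs ! s) (snd (ps ! s)))
           < min ((vs ! Suc s) (fst (ps ! Suc s))) ((vs ! Suc s) (snd (ps ! Suc s)))))"

definition S_desc :: "nat \<Rightarrow> nat \<Rightarrow> (nat \<Rightarrow> nat) set" where
  "S_desc n k = {v. v permutes {1..n} \<and> (\<forall>a b. k + 1 \<le> a \<and> a < b \<and> b \<le> n \<longrightarrow> v a > v b)}"

end

theory Submission imports Defs begin

definition PP :: "nat \<Rightarrow> (nat \<times> nat) set" where
  "PP n = {(x,y). 1 \<le> x \<and> x < y \<and> y \<le> n}"

lemma finite_PP: "finite (PP n)"
  unfolding PP_def by (rule finite_subset[of _ "{1..n} \<times> {1..n}"]) auto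

lemma inv_len_alt: "inv_len n f = card {q \<in> PP n. f (fst q) > f (snd q)}"
  unfolding inv_len_def PP_def by (rule arg_cong[where f=card]) auto

lemma split_count:
  assumes "1 \<le> a" "a < b" "b \<le> n"
  defines "\<tau> \<equiv> Transposition.transpose a b"
  defines "G \<equiv> {q \<in> PP n. \<tau> (fst q) < \<tau> (snd q)}"
  defines "B \<equiv> {q \<in> PP n. \<tau> (snd q) < \<tau> (fst q)}"
  shows "card {q \<in> PP n. R q} = card {q \<in> G. R q} + card {q \<in> B. R q}"
proof -
  have "{q \<in> PP n. R q} = {q \<in> G. R q} \<union> {q \<in> B. R q}"
  proof -
    have "\<tau> x \<noteq> \<tau> y" if "x \<noteq> y" for x y
      using that unfolding \<tau>_def by (metis transpose_involutory)
    hence "\<tau> x < \<tau> y \<or> \<tau> y < \<tau> x" if "x < y" for x y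
      using that by (metis less_irrefl linorder_neqE_nat)
    thus ?thesis unfolding G_def B_def PP_def by fastforce
  qed
  moreover have "{q \<in> G. R q} \<inter> {q \<in> B. R q} = {}" unfolding G_def B_def by auto
  moreover have "finite {q \<in> G. R q}" "finite {q \<in> B. R q}"
    unfolding G_def B_def using finite_PP by auto
  ultimately show ?thesis by (simp add: card_Un_disjoint)
qed

lemma good_count:
  assumes "1 \<le> a" "a < b" "b \<le> n"
  defines "\<tau> \<equiv> Transposition.transpose a b"
  defines "G \<equiv> {q \<in> PP n. \<tau> (fst q) < \<tau> (snd q)}"
  shows "card {q \<in> G. (u \<circ> \<tau>) (fst q) > (u \<circ> \<tau>) (snd q)} = card {q \<in> G. u (fst q) > u (snd q)}"
proof -
  define \<sigma> where "\<sigma> = (\<lambda>q. (\<tau> (fst q), \<tau> (snd q)))"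
  have tt: "\<tau> (\<tau> x) = x" for x unfolding \<tau>_def by simp
  have rng: "1 \<le> \<tau> x \<and> \<tau> x \<le> n" if "1 \<le> x" "x \<le> n" for x
    using that assms(1-3) unfolding \<tau>_def transpose_def by auto
  have "bij_betw \<sigma> {q \<in> G. u (fst q) > u (snd q)} {q \<in> G. (u \<circ> \<tau>) (fst q) > (u \<circ> \<tau>) (snd q)}"
    apply (rule bij_betw_byWitness[where f'=\<sigma>])
    using rng unfolding \<sigma>_def G_def PP_def by (auto simp: tt)
  thus ?thesis by (simp add: bij_betw_same_card)
qed

lemma bad_set:
  assumes "1 \<le> a" "a < b" "b \<le> n"
  defines "\<tau> \<equiv> Transposition.transpose a b"
  defines "B \<equiv> {q \<in> PP n. \<tau> (snd q) < \<tau> (fst q)}"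
  shows "card {q \<in> B. R q} = (if R (a,b) then 1 else 0) + card {p \<in> {a<..<b}. R (a,p)}
     + card {p \<in> {a<..<b}. R (p,b)}"
proof -
  have "{q \<in> B. R q} = ((if R (a,b) then {(a,b)} else {}) \<union> (\<lambda>p. (a,p)) ` {p \<in> {a<..<b}. R (a,p)})
     \<union> (\<lambda>p. (p,b)) ` {p \<in> {a<..<b}. R (p,b)}"
    using assms(1-3) unfolding B_def PP_def \<tau>_def transpose_def by (auto split: if_splits)
  moreover have "card ((if R (a,b) then {(a,b)} else {}) \<union> (\<lambda>p. (a,p)) ` {p \<in> {a<..<b}. R (a,p)})
     = (if R (a,b) then 1 else 0) + card {p \<in> {a<..<b}. R (a,p)}"
    by (subst card_Un_disjoint) (auto simp: card_image inj_on_def)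
  moreover have "card (((if R (a,b) then {(a,b)} else {}) \<union> (\<lambda>p. (a,p)) ` {p \<in> {a<..<b}. R (a,p)})
     \<union> (\<lambda>p. (p,b)) ` {p \<in> {a<..<b}. R (p,b)}) = card ((if R (a,b) then {(a,b)} else {}) \<union> (\<lambda>p. (a,p)) ` {p \<in> {a<..<b}. R (a,p)})
     + card {p \<in> {a<..<b}. R (p,b)}"
    by (subst card_Un_disjoint) (auto simp: card_image inj_on_def)
  ultimately show ?thesis by simp
qed

lemma cover_props:
  assumes ab: "1 \<le> a" "a < b" "b \<le> n" and inj: "inj u"
    and len: "inv_len n (u \<circ> Transposition.transpose a b) = inv_len n u + 1"
  shows "u a < u b \<and> \<not> (\<exists>p. a < p \<and> p < b \<and> u a < u p \<and> u p < u b)"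
proof -
  define \<tau> where "\<tau> = Transposition.transpose a b"
  define w where "w = u \<circ> \<tau>"
  define G where "G = {q \<in> PP n. \<tau> (fst q) < \<tau> (snd q)}"
  define B where "B = {q \<in> PP n. \<tau> (snd q) < \<tau> (fst q)}"
  define I where "I = {a<..<b}"
  have e1: "inv_len n w = card {q \<in> G. w (fst q) > w (snd q)} + card {q \<in> B. w (fst q) > w (snd q)}"
    unfolding inv_len_alt G_def B_def \<tau>_def by (rule split_count[OF ab])
  have e2: "inv_len n u = card {q \<in> G. u (fst q) > u (snd q)} + card {q \<in> B. u (fst q) > u (snd q)}"
    unfolding inv_len_alt G_def B_def \<tau>_def by (rule split_count[OF ab])
  have e3: "card {q \<in> G. w (fst q) > w (snd q)} = card {q \<in> G. u (fst q) > u (snd q)}"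
    unfolding G_def w_def \<tau>_def by (rule good_count[OF ab])
  have bw: "card {q \<in> B. w (fst q) > w (snd q)} = (if w a > w b then 1 else 0) + card {p \<in> I. w a > w p}
     + card {p \<in> I. w p > w b}"
    unfolding B_def \<tau>_def I_def using bad_set[OF ab, of "\<lambda>q. w (fst q) > w (snd q)"] by simp
  have bu: "card {q \<in> B. u (fst q) > u (snd q)} = (if u a > u b then 1 else 0) + card {p \<in> I. u a > u p}
     + card {p \<in> I. u p > u b}"
    unfolding B_def \<tau>_def I_def using bad_set[OF ab, of "\<lambda>q. u (fst q) > u (snd q)"] by simp
  have wa: "w a = u b" and wb: "w b = u a" unfolding w_def \<tau>_def by auto
  have wp: "w p = u p" if "p \<in> I" for p using that unfolding w_def \<tau>_def I_def by auto
  have s1: "{p \<in> I. w a > w p} = {p \<in> I. u b > u p}" unfolding wa using wp by (intro Collect_cong) (metis)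
  have s2: "{p \<in> I. w p > w b} = {p \<in> I. u p > u a}" unfolding wb using wp by (intro Collect_cong) (metis)
  have key: "(if u b > u a then 1 else 0) + card {p \<in> I. u b > u p} + card {p \<in> I. u p > u a}
     = (if u a > u b then 1 else 0) + card {p \<in> I. u a > u p} + card {p \<in> I. u p > u b} + 1"
    proof -
    have lw: "inv_len n w = inv_len n u + 1" using len unfolding w_def \<tau>_def .
    have bw': "card {q \<in> B. w (fst q) > w (snd q)} = (if u b > u a then 1 else 0) + card {p \<in> I. u b > u p}
     + card {p \<in> I. u p > u a}" using bw unfolding s1 s2 by (simp only: wa wb)
    show ?thesis using lw e1 e2 e3 bw' bu by linarith
  qed
  have fI: "finite I" unfolding I_def by simp
  have neq: "u a \<noteq> u b" using inj ab(2) by (metis inj_eq less_irrefl)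
  have lt: "u a < u b"
  proof (rule ccontr)
    assume "\<not> u a < u b"
    hence gt: "u b < u a" using neq by simp
    have "{p \<in> I. u b > u p} \<subseteq> {p \<in> I. u a > u p}" using gt by force
    hence "card {p \<in> I. u b > u p} \<le> card {p \<in> I. u a > u p}"
      using fI by (simp add: card_mono)
    moreover have "{p \<in> I. u p > u a} \<subseteq> {p \<in> I. u p > u b}" using gt by force
    hence "card {p \<in> I. u p > u a} \<le> card {p \<in> I. u p > u b}"
      using fI by (simp add: card_mono)
    ultimately show False using key gt by simp
  qed
  moreover have "\<not> (\<exists>p. a < p \<and> p < b \<and> u a < u p \<and> u p < u b)"
  proof
    assume "\<exists>p. a < p \<and> p < b \<and> u a < u p \<and> u p < u b"
    then obtain p where p: "p \<in> I" "u a < u p" "u p < u b" unfolding I_def by auto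
    have s1: "{p \<in> I. u a > u p} \<subseteq> {p \<in> I. u b > u p}" using lt by force
    have m1: "p \<in> {p \<in> I. u b > u p} - {p \<in> I. u a > u p}" using p by simp
    have "{p \<in> I. u a > u p} \<subset> {p \<in> I. u b > u p}" using s1 m1 by blast
    hence c1: "card {p \<in> I. u a > u p} < card {p \<in> I. u b > u p}"
      using fI by (simp add: psubset_card_mono)
    have s2: "{p \<in> I. u p > u b} \<subseteq> {p \<in> I. u p > u a}" using lt by force
    have m2: "p \<in> {p \<in> I. u p > u a} - {p \<in> I. u p > u b}" using p by simp
    have "{p \<in> I. u p > u b} \<subset> {p \<in> I. u p > u a}" using s2 m2 by blast
    hence c2: "card {p \<in> I. u p > u b} < card {p \<in> I. u p > u a}"
      using fI by (simp add: psubset_card_mono)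
    show False using key lt c1 c2 by simp
  qed
  ultimately show ?thesis by blast
qed


definition Dk :: "nat \<Rightarrow> nat \<Rightarrow> (nat \<Rightarrow> nat) \<Rightarrow> bool" where
  "Dk n k f \<longleftrightarrow> (\<forall>x y. k + 1 \<le> x \<and> x < y \<and> y \<le> n \<longrightarrow> f x > f y)"

lemma step_desc:
  assumes kc: "kcover_at n k u w a b" and pu: "u permutes {1..n}" and dw: "Dk n k w"
  shows "Dk n k u"
proof -
  have ab: "1 \<le> a" "a \<le> k" "k < b" "b \<le> n" and wdef: "w = u \<circ> Transposition.transpose a b"
    and len: "inv_len n w = inv_len n u + 1" using kc unfolding kcover_at_def by auto
  have inj: "inj u" using pu by (rule permutes_inj)
  have cp: "u a < u b \<and> \<not> (\<exists>p. a < p \<and> p < b \<and> u a < u p \<and> u p < u b)"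
    using cover_props[of a b n u] ab inj len wdef by simp
  have wa: "w a = u b" and wb: "w b = u a" unfolding wdef by auto
  have wo: "w x = u x" if "x \<noteq> a" "x \<noteq> b" for x using that unfolding wdef by auto
  show ?thesis unfolding Dk_def
  proof (intro allI impI)
    fix x y assume xy: "k + 1 \<le> x \<and> x < y \<and> y \<le> n"
    have xa: "x \<noteq> a" "y \<noteq> a" using xy ab by auto
    show "u x > u y"
    proof (cases "x = b")
      case True
      hence "y \<noteq> b" using xy by simp
      hence "u y = w y" using wo xa by simp
      also have "\<dots> < w b" using dw xy True unfolding Dk_def by blast
      also have "\<dots> < u b" using wb cp by simp
      finally show ?thesis using True by simp
    next
      case False
      note xb = False
      show ?thesis
      proof (cases "y = b")
        case True
        have "u x = w x" using wo xa xb by simp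
        have "w x > w b" using dw xy True unfolding Dk_def by blast
        hence g: "u x > u a" using wb \<open>u x = w x\<close> by simp
        have "u x \<noteq> u b" using inj xb by (metis inj_eq)
        moreover have "\<not> (u x < u b)" using cp g xy True ab by auto
        ultimately show ?thesis using True by simp
      next
        case False
        have "u x = w x" "u y = w y" using wo xa xb False by auto
        moreover have "w x > w y" using dw xy unfolding Dk_def by blast
        ultimately show ?thesis by simp
      qed
    qed
  qed
qed

lemma chain_desc:
  assumes ch: "incr_kchain n k x y" and dy: "Dk n k y"
  shows "x permutes {1..n} \<and> Dk n k x"
proof -
  obtain vs ps where vs: "vs \<noteq> []" "length ps = length vs - 1" "hd vs = x" "last vs = y"
    "\<forall>v\<in>set vs. v permutes {1..n}"
    "\<forall>s < length ps. kcover_at n k (vs ! s) (vs ! Suc s) (fst (ps ! s)) (snd (ps ! s))"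
    using ch unfolding incr_kchain_def by blast
  have "Dk n k (vs ! s)" if "s \<le> length vs - 1" for s
    using that
  proof (induction s rule: inc_induct)
    case base
    then show ?case using dy vs(1,4) by (simp add: last_conv_nth)
  next
    case (step m)
    have "vs ! m \<in> set vs" using step.hyps vs(1) by simp
    hence "vs ! m permutes {1..n}" using vs(5) by blast
    moreover have "kcover_at n k (vs ! m) (vs ! Suc m) (fst (ps ! m)) (snd (ps ! m))"
      using vs(6) vs(2) step.hyps by simp
    ultimately show ?case using step_desc step.IH by blast
  qed
  from this[of 0] have "Dk n k (vs ! 0)" by simp
  moreover have "vs ! 0 = x" using vs(1,3) by (simp add: hd_conv_nth)
  moreover have "x permutes {1..n}" using vs(1,3,5) by auto
  ultimately show ?thesis by simp
qed

lemma wlong_perm: "wlong n permutes {1..n}"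
proof (rule bij_imp_permutes)
  show "bij_betw (wlong n) {1..n} {1..n}"
  proof (rule bij_betw_imageI)
    show "inj_on (wlong n) {1..n}" unfolding wlong_def inj_on_def by auto
    show "wlong n ` {1..n} = {1..n}"
    proof
      show "wlong n ` {1..n} \<subseteq> {1..n}" unfolding wlong_def by auto
      show "{1..n} \<subseteq> wlong n ` {1..n}"
      proof
        fix y assume y: "y \<in> {1..n}"
        hence "wlong n (n + 1 - y) = y" unfolding wlong_def by auto
        moreover have "n + 1 - y \<in> {1..n}" using y by auto
        ultimately show "y \<in> wlong n ` {1..n}" by (metis image_eqI)
      qed
    qed
  qed
  show "wlong n x = x" if "x \<notin> {1..n}" for x using that unfolding wlong_def by auto
qed

theorem corollary3p8:
  fixes n :: nat and u :: "nat \<Rightarrow> nat \<Rightarrow> nat"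
  assumes compat: "\<forall>i. 1 \<le> i \<and> i \<le> n - 1 \<longrightarrow> incr_kchain n i (u i) (u (i - 1))"
    and u0: "u 0 = wlong n"
  shows "\<forall>i < n. u i \<in> S_desc n i"
proof (intro allI impI)
  fix i assume "i < n"
  hence "u i permutes {1..n} \<and> Dk n i (u i)"
  proof (induction i)
    case 0
    have "Dk n 0 (wlong n)" unfolding Dk_def wlong_def by auto
    then show ?case using u0 wlong_perm by simp
  next
    case (Suc j)
    have "Dk n j (u j)" using Suc by simp
    hence "Dk n (Suc j) (u j)" unfolding Dk_def by auto
    moreover have "1 \<le> Suc j \<and> Suc j \<le> n - 1" using Suc.prems by simp
    hence "incr_kchain n (Suc j) (u (Suc j)) (u (Suc j - 1))" using compat by blast
    hence "incr_kchain n (Suc j) (u (Suc j)) (u j)" by simp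
    ultimately show ?case using chain_desc by blast
  qed
  thus "u i \<in> S_desc n i" unfolding S_desc_def Dk_def by auto
qed

end
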